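(* Let $(q_i,P_i)_{i\in\mathcal I}$ be a mechanism with finite message sets $M_i$ and opt-out messages, let $\alpha_i(m_i'\mid m_i)\ge0$ be nonnegative numbers, and let $\epsilon>0$. Then there exist $a>0$, an integer $k\ge1$ and a mechanism $(\tilde q_i,\tilde P_i)_{i\in\mathcal I}$ with message sets $\tilde M_i=\{0,1,\ldots,k\}$ for every $i$ (with $0$ the opt-out message), such that, with the dual variables $\tilde\alpha_i(j'\mid j)=a$ if $j'=j+1$ and $\tilde\alpha_i(j'\mid j)=0$ otherwise, the virtual revenue $\widetilde{\mathrm{Rev}}$ of $(\tilde q_i,\tilde P_i,\tilde\alpha_i)$ satisfies $$\widetilde{\mathrm{Rev}}(v,\tilde m)\ge\min_{m\in M}\mathrm{Rev}(v,m)-I\epsilon\quad\text{for all }v\in V,\ \tilde m\in\prod_i\tilde M_i,$$ where $\mathrm{Rev}$ is the virtual revenue of $(q_i,P_i,\alpha_i)$. Moreover, if a mechanism with $M_i=\{0,\ldots,k\}$ for all $i$ is paired with such $\tilde\alpha_i$ (the same for all $i$), then its symmetrization $\tilde q_1(m')=\frac1{I!}\sum_\sigma q_{\sigma(1)}(m_{\sigma(1)}=m_1',\ldots,m_{\sigma(I)}=m_I')$ (and similarly for payments and other buyers, summing over permutations $\sigma$ of $\{1,\ldots,I\}$) has virtual revenue at least $\min_m\mathrm{Rev}(v,m)$ at every $(v,m)$.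
   Context: A mechanism for buyers $\mathcal I=\{1,\ldots,I\}$ with common value $v\in V=\{0,\nu,\ldots,1\}$ consists of finite message sets $M_i$ ($M=\prod_iM_i$), allocation rules $q_i:M\to[0,1]$ with $\sum_iq_i(m)\le1$, and payment rules $P_i:M\to\mathbb R$, where each $M_i$ contains an opt-out message $0$ with $q_i(0,m_{-i})=P_i(0,m_{-i})=0$ for all $m_{-i}$. $U_i(v,m)=v\,q_i(m)-P_i(m)$. Virtual revenue associated with nonnegative numbers $\alpha_i(m_i'\mid m_i)$: $\mathrm{Rev}(v,m)=\sum_i\Big(P_i(m)+\sum_{m_i'\in M_i}\big(U_i(v,(m_i',m_{-i}))-U_i(v,m)\big)\alpha_i(m_i'\mid m_i)\Big)$. *)

theory Defs
  imports Complex_Main "HOL-Library.FuncSet" "HOL-Combinatorics.Permutations"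
begin

definition profiles :: "nat \<Rightarrow> (nat \<Rightarrow> 'm set) \<Rightarrow> (nat \<Rightarrow> 'm) set" where
  "profiles n M = PiE {1..n} M"

definition value_grid :: "nat \<Rightarrow> real set" where
  "value_grid N = {real j / real N | j. j \<le> N}"

definition is_mechanism ::
  "nat \<Rightarrow> (nat \<Rightarrow> 'm set) \<Rightarrow> 'm \<Rightarrow> (nat \<Rightarrow> (nat \<Rightarrow> 'm) \<Rightarrow> real)
     \<Rightarrow> (nat \<Rightarrow> (nat \<Rightarrow> 'm) \<Rightarrow> real) \<Rightarrow> bool" where
  "is_mechanism n M oo q P \<longleftrightarrow>
     (\<forall>i\<in>{1..n}. finite (M i) \<and> oo \<in> M i) \<and>
     (\<forall>m\<in>profiles n M.
        (\<forall>i\<in>{1..n}. 0 \<le> q i m \<and> q i m \<le> 1) \<and>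
        (\<Sum>i=1..n. q i m) \<le> 1 \<and>
        (\<forall>i\<in>{1..n}. q i (m(i := oo)) = 0 \<and> P i (m(i := oo)) = 0))"

definition utility ::
  "(nat \<Rightarrow> (nat \<Rightarrow> 'm) \<Rightarrow> real) \<Rightarrow> (nat \<Rightarrow> (nat \<Rightarrow> 'm) \<Rightarrow> real)
     \<Rightarrow> nat \<Rightarrow> real \<Rightarrow> (nat \<Rightarrow> 'm) \<Rightarrow> real" where
  "utility q P i v m = v * q i m - P i m"

(* alpha i m' mi  stands for alpha_i(m' | mi) *)
definition virtual_revenue ::
  "nat \<Rightarrow> (nat \<Rightarrow> 'm set) \<Rightarrow> (nat \<Rightarrow> (nat \<Rightarrow> 'm) \<Rightarrow> real)
     \<Rightarrow> (nat \<Rightarrow> (nat \<Rightarrow> 'm) \<Rightarrow> real) \<Rightarrow> (nat \<Rightarrow> 'm \<Rightarrow> 'm \<Rightarrow> real)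
     \<Rightarrow> real \<Rightarrow> (nat \<Rightarrow> 'm) \<Rightarrow> real" where
  "virtual_revenue n M q P \<alpha> v m =
     (\<Sum>i=1..n. P i m +
        (\<Sum>m'\<in>M i. (utility q P i v (m(i := m')) - utility q P i v m) * \<alpha> i m' (m i)))"

definition min_virtual_revenue ::
  "nat \<Rightarrow> (nat \<Rightarrow> 'm set) \<Rightarrow> (nat \<Rightarrow> (nat \<Rightarrow> 'm) \<Rightarrow> real)
     \<Rightarrow> (nat \<Rightarrow> (nat \<Rightarrow> 'm) \<Rightarrow> real) \<Rightarrow> (nat \<Rightarrow> 'm \<Rightarrow> 'm \<Rightarrow> real)
     \<Rightarrow> real \<Rightarrow> real" where
  "min_virtual_revenue n M q P \<alpha> v = Min ((\<lambda>m. virtual_revenue n M q P \<alpha> v m) ` profiles n M)"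

definition ladder_alpha :: "real \<Rightarrow> nat \<Rightarrow> nat \<Rightarrow> nat \<Rightarrow> real" where
  "ladder_alpha a i j' j = (if j' = j + 1 then a else 0)"

(* symmetrization: f~_i(m') = 1/n! * sum_sigma f_{sigma i}(m) where m_{sigma j} = m'_j,
   i.e. m = m' o inv sigma *)
definition symmetrize :: "nat \<Rightarrow> (nat \<Rightarrow> (nat \<Rightarrow> 'm) \<Rightarrow> real) \<Rightarrow> nat \<Rightarrow> (nat \<Rightarrow> 'm) \<Rightarrow> real" where
  "symmetrize n f i m' =
     (\<Sum>\<sigma>\<in>{\<sigma>. \<sigma> permutes {1..n}}. f (\<sigma> i) (m' \<circ> inv \<sigma>)) / fact n"

end

theory Submission
  imports Defs
begin


primrec nuf :: "'m set \<Rightarrow> ('m \<Rightarrow> 'm \<Rightarrow> real) \<Rightarrow> 'm \<Rightarrow> real \<Rightarrow> nat \<Rightarrow> 'm \<Rightarrow> real" where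
  "nuf A b oo h 0 = (\<lambda>y. if y = oo then 1 else 0)"
| "nuf A b oo h (Suc j) = (\<lambda>y. nuf A b oo h j y * (1 - h * (\<Sum>z\<in>A. b z y)) + h * (\<Sum>x\<in>A. nuf A b oo h j x * b y x))"

lemma nuf_props:
  assumes "finite A" "oo \<in> A" "\<forall>x\<in>A. \<forall>y\<in>A. b y x \<ge> 0" "h \<ge> 0" "\<forall>y\<in>A. h * (\<Sum>z\<in>A. b z y) \<le> 1"
  shows "(\<forall>y\<in>A. nuf A b oo h j y \<ge> 0) \<and> (\<Sum>y\<in>A. nuf A b oo h j y) = 1"
proof (induction j)
  case 0
  then show ?case using assms(1,2) by (simp add: sum.delta)
next
  case (Suc j)
  let ?v = "nuf A b oo h j"
  have nn: "\<forall>y\<in>A. nuf A b oo h (Suc j) y \<ge> 0"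
  proof
    fix y assume y: "y \<in> A"
    have "?v y * (1 - h * (\<Sum>z\<in>A. b z y)) \<ge> 0" using Suc y assms(5) by simp
    moreover have "(\<Sum>x\<in>A. ?v x * b y x) \<ge> 0" using Suc y assms(3) by (intro sum_nonneg) simp
    ultimately show "nuf A b oo h (Suc j) y \<ge> 0" using assms(4) by simp
  qed
  have "(\<Sum>y\<in>A. nuf A b oo h (Suc j) y) = (\<Sum>y\<in>A. ?v y) - h * (\<Sum>y\<in>A. \<Sum>z\<in>A. ?v y * b z y) + h * (\<Sum>y\<in>A. \<Sum>x\<in>A. ?v x * b y x)"
    by (simp add: sum.distrib sum_subtractf right_diff_distrib sum_distrib_left mult.assoc mult.left_commute)
  also have "(\<Sum>y\<in>A. \<Sum>x\<in>A. ?v x * b y x) = (\<Sum>y\<in>A. \<Sum>z\<in>A. ?v y * b z y)"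
    by (rule sum.swap)
  finally show ?case using nn Suc by simp
qed

definition Wt :: "nat \<Rightarrow> (nat \<Rightarrow> 'm set) \<Rightarrow> (nat \<Rightarrow> 'm \<Rightarrow> 'm \<Rightarrow> real) \<Rightarrow> 'm \<Rightarrow> real \<Rightarrow> (nat \<Rightarrow> nat) \<Rightarrow> (nat \<Rightarrow> 'm) \<Rightarrow> real" where
  "Wt n M b oo h jt m = (\<Prod>l\<in>{1..n}. nuf (M l) (b l) oo h (jt l) (m l))"

lemma Wt_props:
  assumes "\<forall>i\<in>{1..n}. finite (M i) \<and> oo \<in> M i"
    and "\<forall>i\<in>{1..n}. \<forall>x\<in>M i. \<forall>y\<in>M i. b i y x \<ge> 0" "h \<ge> 0"
    and "\<forall>i\<in>{1..n}. \<forall>y\<in>M i. h * (\<Sum>z\<in>M i. b i z y) \<le> 1"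
  shows "(\<forall>m\<in>profiles n M. Wt n M b oo h jt m \<ge> 0) \<and> (\<Sum>m\<in>profiles n M. Wt n M b oo h jt m) = 1"
proof
  have P: "\<And>l. l \<in> {1..n} \<Longrightarrow> (\<forall>y\<in>M l. nuf (M l) (b l) oo h (jt l) y \<ge> 0) \<and> (\<Sum>y\<in>M l. nuf (M l) (b l) oo h (jt l) y) = 1"
    using assms by (intro nuf_props) auto
  show "\<forall>m\<in>profiles n M. Wt n M b oo h jt m \<ge> 0"
    unfolding Wt_def profiles_def using P by (auto intro!: prod_nonneg simp: PiE_def Pi_def)
  have "(\<Sum>m\<in>profiles n M. Wt n M b oo h jt m) = (\<Prod>l\<in>{1..n}. \<Sum>y\<in>M l. nuf (M l) (b l) oo h (jt l) y)"
    unfolding Wt_def profiles_def using assms(1)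
    by (subst prod_sum_PiE[where f="\<lambda>l y. nuf (M l) (b l) oo h (jt l) y"]) auto
  also have "\<dots> = 1" using P by simp
  finally show "(\<Sum>m\<in>profiles n M. Wt n M b oo h jt m) = 1" .
qed

lemma swap_upd:
  assumes "i \<in> {1..n}"
  shows "(\<Sum>m\<in>profiles n M. \<Sum>x\<in>M i. F m x) = (\<Sum>m\<in>profiles n M. \<Sum>y\<in>M i. F (m(i:=y)) (m i))"
proof -
  let ?Pr = "profiles n M"
  have mem: "m(i:=x) \<in> ?Pr" if "m \<in> ?Pr" "x \<in> M i" for m x
    using that assms unfolding profiles_def by (auto simp: PiE_def Pi_def extensional_def)
  have mi: "m i \<in> M i" if "m \<in> ?Pr" for m
    using that assms unfolding profiles_def by auto
  have "(\<Sum>m\<in>?Pr. \<Sum>x\<in>M i. F m x) = (\<Sum>(m,x)\<in>?Pr \<times> M i. F m x)"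
    by (simp add: sum.cartesian_product)
  also have "\<dots> = (\<Sum>(m,y)\<in>?Pr \<times> M i. F (m(i:=y)) (m i))"
    by (rule sum.reindex_bij_witness[where i="\<lambda>(m,y). (m(i:=y), m i)" and j="\<lambda>(m,y). (m(i:=y), m i)"])
       (auto simp: mem mi)
  also have "\<dots> = (\<Sum>m\<in>?Pr. \<Sum>y\<in>M i. F (m(i:=y)) (m i))"
    by (simp add: sum.cartesian_product)
  finally show ?thesis .
qed

lemma Wt_shift:
  assumes i: "i \<in> {1..n}"
  shows "(\<Sum>m\<in>profiles n M. Wt n M b oo h (jt(i:=Suc (jt i))) m * g m) =
    (\<Sum>m\<in>profiles n M. Wt n M b oo h jt m * (g m + h * (\<Sum>m'\<in>M i. b i m' (m i) * (g (m(i:=m')) - g m))))"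
proof -
  let ?Pr = "profiles n M"
  define R where "R m = (\<Prod>l\<in>{1..n}-{i}. nuf (M l) (b l) oo h (jt l) (m l))" for m
  define \<nu> where "\<nu> = nuf (M i) (b i) oo h (jt i)"
  define S where "S y = (\<Sum>z\<in>M i. b i z y)" for y
  have W1: "Wt n M b oo h (jt(i:=s)) m = nuf (M i) (b i) oo h s (m i) * R m" for s m
  proof -
    have "Wt n M b oo h (jt(i:=s)) m = nuf (M i) (b i) oo h s (m i) *
       (\<Prod>l\<in>{1..n}-{i}. nuf (M l) (b l) oo h ((jt(i:=s)) l) (m l))"
      unfolding Wt_def using i by (subst prod.remove[of _ i]) auto
    also have "(\<Prod>l\<in>{1..n}-{i}. nuf (M l) (b l) oo h ((jt(i:=s)) l) (m l)) = R m"
      unfolding R_def by (rule prod.cong) auto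
    finally show ?thesis .
  qed
  have W0: "Wt n M b oo h jt m = \<nu> (m i) * R m" for m
    using W1[of "jt i" m] by (simp add: \<nu>_def)
  have Rupd: "R (m(i:=y)) = R m" for m y
    unfolding R_def by (rule prod.cong) auto
  have "(\<Sum>m\<in>?Pr. Wt n M b oo h (jt(i:=Suc (jt i))) m * g m) =
     (\<Sum>m\<in>?Pr. \<nu> (m i) * R m * g m) - h * (\<Sum>m\<in>?Pr. \<nu> (m i) * S (m i) * R m * g m)
     + h * (\<Sum>m\<in>?Pr. \<Sum>x\<in>M i. \<nu> x * b i (m i) x * R m * g m)"
    unfolding W1 by (simp add: \<nu>_def S_def sum.distrib sum_subtractf sum_distrib_left sum_distrib_right
        algebra_simps)
  also have "(\<Sum>m\<in>?Pr. \<Sum>x\<in>M i. \<nu> x * b i (m i) x * R m * g m) =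
      (\<Sum>m\<in>?Pr. \<Sum>y\<in>M i. \<nu> (m i) * b i y (m i) * R m * g (m(i:=y)))"
    using swap_upd[OF i, where M=M and F="\<lambda>m x. \<nu> x * b i (m i) x * R m * g m"] by (simp add: Rupd)
  also have "(\<Sum>m\<in>?Pr. \<nu> (m i) * R m * g m) - h * (\<Sum>m\<in>?Pr. \<nu> (m i) * S (m i) * R m * g m)
     + h * (\<Sum>m\<in>?Pr. \<Sum>y\<in>M i. \<nu> (m i) * b i y (m i) * R m * g (m(i:=y))) =
     (\<Sum>m\<in>?Pr. \<nu> (m i) * R m * (g m + h * (\<Sum>m'\<in>M i. b i m' (m i) * (g (m(i:=m')) - g m))))"
    by (simp add: S_def sum.distrib sum_subtractf sum_distrib_left sum_distrib_right algebra_simps)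
  finally show ?thesis unfolding W0 .
qed

lemma ladder_sum:
  "(\<Sum>j'\<in>{0..k}. f j' * ladder_alpha a i j' j) = (if Suc j \<le> k then f (Suc j) * a else 0)"
proof -
  have "(\<lambda>j'. f j' * ladder_alpha a i j' j) = (\<lambda>j'. if j' = Suc j then f (Suc j) * a else 0)"
    by (auto simp: ladder_alpha_def fun_eq_iff)
  then show ?thesis by (simp only:) (simp add: sum.delta')
qed

lemma Wt_zero:
  assumes "i \<in> {1..n}" "jt i = 0" "m i \<noteq> oo"
  shows "Wt n M b oo h jt m = 0"
  unfolding Wt_def using assms by (intro prod_zero) (auto intro!: bexI[of _ i])

lemma G_bound:
  assumes "0 \<le> v" "v \<le> 1" "\<forall>m'\<in>A. \<alpha> m' \<ge> 0"
  shows "(\<Sum>m'\<in>A. (utility q P i v (m(i:=m')) - utility q P i v m) * \<alpha> m')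
     \<le> (\<Sum>m'\<in>A. \<alpha> m' * (\<bar>q i (m(i:=m'))\<bar> + \<bar>P i (m(i:=m'))\<bar> + \<bar>q i m\<bar> + \<bar>P i m\<bar>))"
proof (rule sum_mono)
  fix m' assume m': "m' \<in> A"
  let ?x = "utility q P i v (m(i:=m')) - utility q P i v m"
  have "?x \<le> \<bar>q i (m(i:=m'))\<bar> + \<bar>P i (m(i:=m'))\<bar> + \<bar>q i m\<bar> + \<bar>P i m\<bar>"
  proof -
    have "\<bar>v * q i (m(i:=m'))\<bar> \<le> \<bar>q i (m(i:=m'))\<bar>" using assms(1,2)
      by (simp add: abs_mult mult_left_le_one_le)
    moreover have "\<bar>v * q i m\<bar> \<le> \<bar>q i m\<bar>" using assms(1,2)
      by (simp add: abs_mult mult_left_le_one_le)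
    ultimately show ?thesis unfolding utility_def by linarith
  qed
  then show "?x * \<alpha> m' \<le> \<alpha> m' * (\<bar>q i (m(i:=m'))\<bar> + \<bar>P i (m(i:=m'))\<bar> + \<bar>q i m\<bar> + \<bar>P i m\<bar>)"
    using assms(3) m' by (simp add: mult.commute mult_left_mono)
qed

lemma part1:
  assumes mech: "is_mechanism n M oo q P"
    and apos: "\<forall>i\<in>{1..n}. \<forall>m'\<in>M i. \<forall>mi\<in>M i. \<alpha> i m' mi \<ge> 0"
    and eps: "\<epsilon> > 0"
  shows "\<exists>(a::real) (k::nat) (qt::nat \<Rightarrow> (nat \<Rightarrow> nat) \<Rightarrow> real) (Pt::nat \<Rightarrow> (nat \<Rightarrow> nat) \<Rightarrow> real).
            a > 0 \<and> k \<ge> 1 \<and> is_mechanism n (\<lambda>_. {0..k}) 0 qt Pt \<and>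
            (\<forall>v. 0 \<le> v \<and> v \<le> 1 \<longrightarrow> (\<forall>mt\<in>profiles n (\<lambda>_. {0..k}).
               virtual_revenue n (\<lambda>_. {0..k}) qt Pt (ladder_alpha a) v mt
                 \<ge> min_virtual_revenue n M q P \<alpha> v - real n * \<epsilon>))"
proof -
  let ?I = "{1..n}"
  let ?Pr = "profiles n M"
  have fin: "\<forall>i\<in>?I. finite (M i) \<and> oo \<in> M i" using mech unfolding is_mechanism_def by blast
  have mechm: "\<And>m. m \<in> ?Pr \<Longrightarrow> (\<forall>i\<in>?I. 0 \<le> q i m \<and> q i m \<le> 1) \<and> (\<Sum>i=1..n. q i m) \<le> 1 \<and>
        (\<forall>i\<in>?I. q i (m(i := oo)) = 0 \<and> P i (m(i := oo)) = 0)"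
    using mech unfolding is_mechanism_def by blast
  have finPr: "finite ?Pr" unfolding profiles_def using fin by (intro finite_PiE) auto
  have mPr: "m i \<in> M i" if "m \<in> ?Pr" "i \<in> ?I" for m i
    using that unfolding profiles_def by auto
  have anneg: "0 \<le> \<alpha> i m' (m i)" if "m \<in> ?Pr" "i \<in> ?I" "m' \<in> M i" for m i m'
    using apos mPr that by blast
  define Smax where "Smax = (\<Sum>i\<in>?I. \<Sum>x\<in>M i. \<Sum>y\<in>M i. \<alpha> i y x)"
  have Snn: "Smax \<ge> 0" unfolding Smax_def using apos by (intro sum_nonneg) auto
  define a where "a = 1 + Smax"
  define h where "h = 1 / a"
  have apos': "a > 0" "a \<ge> 1" using Snn by (auto simp: a_def)
  have ah: "a * h = 1" using apos' by (simp add: h_def)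
  have h0: "h \<ge> 0" using apos' by (simp add: h_def)
  have hS: "\<forall>i\<in>?I. \<forall>y\<in>M i. h * (\<Sum>z\<in>M i. \<alpha> i z y) \<le> 1"
  proof (intro ballI)
    fix i y assume i: "i \<in> ?I" and y: "y \<in> M i"
    have "(\<Sum>z\<in>M i. \<alpha> i z y) \<le> (\<Sum>x\<in>M i. \<Sum>z\<in>M i. \<alpha> i z x)"
      using fin i y apos by (intro member_le_sum[where f="\<lambda>x. \<Sum>z\<in>M i. \<alpha> i z x"]) (auto intro: sum_nonneg)
    also have "\<dots> \<le> Smax" unfolding Smax_def
      using i apos by (intro member_le_sum[where f="\<lambda>i. \<Sum>x\<in>M i. \<Sum>z\<in>M i. \<alpha> i z x"]) (auto intro!: sum_nonneg)
    finally have "(\<Sum>z\<in>M i. \<alpha> i z y) \<le> Smax" .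
    moreover have "(\<Sum>z\<in>M i. \<alpha> i z y) \<ge> 0" using apos i y by (intro sum_nonneg) auto
    ultimately show "h * (\<Sum>z\<in>M i. \<alpha> i z y) \<le> 1" using apos'
      by (simp add: h_def a_def field_simps)
  qed
  define W where "W = Wt n M \<alpha> oo h"
  have Wp: "\<And>jt. (\<forall>m\<in>?Pr. W jt m \<ge> 0) \<and> (\<Sum>m\<in>?Pr. W jt m) = 1"
    unfolding W_def using fin apos h0 hS by (intro Wt_props) auto
  define G where "G i v m = (\<Sum>m'\<in>M i. (utility q P i v (m(i:=m')) - utility q P i v m) * \<alpha> i m' (m i))" for i v m
  define B where "B = (\<Sum>m\<in>?Pr. \<Sum>i\<in>?I. \<Sum>m'\<in>M i. \<alpha> i m' (m i) * (\<bar>q i (m(i:=m'))\<bar> + \<bar>P i (m(i:=m'))\<bar> + \<bar>q i m\<bar> + \<bar>P i m\<bar>))"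
  have termnn: "\<And>m i. m \<in> ?Pr \<Longrightarrow> i \<in> ?I \<Longrightarrow> 0 \<le> (\<Sum>m'\<in>M i. \<alpha> i m' (m i) * (\<bar>q i (m(i:=m'))\<bar> + \<bar>P i (m(i:=m'))\<bar> + \<bar>q i m\<bar> + \<bar>P i m\<bar>))"
    by (auto intro!: sum_nonneg mult_nonneg_nonneg anneg)
  have Bnn: "B \<ge> 0" unfolding B_def by (auto intro!: sum_nonneg mult_nonneg_nonneg anneg)
  have GB: "G i v m \<le> B" if "0 \<le> v" "v \<le> 1" "i \<in> ?I" "m \<in> ?Pr" for i v m
  proof -
    have "G i v m \<le> (\<Sum>m'\<in>M i. \<alpha> i m' (m i) * (\<bar>q i (m(i:=m'))\<bar> + \<bar>P i (m(i:=m'))\<bar> + \<bar>q i m\<bar> + \<bar>P i m\<bar>))"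
      unfolding G_def using that apos mPr by (intro G_bound) auto
    also have "\<dots> \<le> (\<Sum>i\<in>?I. \<Sum>m'\<in>M i. \<alpha> i m' (m i) * (\<bar>q i (m(i:=m'))\<bar> + \<bar>P i (m(i:=m'))\<bar> + \<bar>q i m\<bar> + \<bar>P i m\<bar>))"
      using that termnn by (intro member_le_sum) auto
    also have "\<dots> \<le> B" unfolding B_def
      using that finPr by (intro member_le_sum) (auto intro!: sum_nonneg mult_nonneg_nonneg anneg)
    finally show ?thesis .
  qed
  define r where "r = a / (1 + a)"
  have r01: "0 < r" "r < 1" using apos' by (auto simp: r_def)
  have ar: "(1 + a) * r = a" using apos' by (simp add: r_def)
  have "\<epsilon> / (a * B + 1) > 0" using eps apos' Bnn by (simp add: add_nonneg_pos)
  then obtain N0 where N0: "r ^ N0 < \<epsilon> / (a * B + 1)"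
    using real_arch_pow_inv[of "\<epsilon> / (a * B + 1)" r] r01 by blast
  define k where "k = Suc N0"
  define d where "d j = (if j = 0 then 0 else B * r ^ (k - j))" for j
  have corr: "(1 + a) * d j - a * d (Suc j) \<ge> - \<epsilon>" if "j < k" for j
  proof (cases "j = 0")
    case True
    have pos: "a * B + 1 > 0" using apos' Bnn by (simp add: add_nonneg_pos)
    have "a * B * r ^ N0 \<le> (a * B + 1) * r ^ N0" using r01 by (simp add: mult_right_mono)
    also have "\<dots> < \<epsilon>" using N0 pos by (simp add: pos_less_divide_eq mult.commute)
    finally show ?thesis using True by (simp add: d_def k_def)
  next
    case False
    have e: "k - j = Suc (k - Suc j)" using that by simp
    have "(1 + a) * d j = a * d (Suc j)" using False
      by (simp add: d_def e ar mult.left_commute[of "1+a"] mult.assoc[symmetric])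
    then show ?thesis using eps by simp
  qed
  define qt where "qt i jt = (\<Sum>m\<in>?Pr. W jt m * q i m)" for i jt
  define Pt where "Pt i jt = (\<Sum>m\<in>?Pr. W jt m * P i m) + d (jt i)" for i jt
  have Wz: "W jt m = 0" if "i \<in> ?I" "jt i = 0" "m i \<noteq> oo" for i jt m
    unfolding W_def using that by (rule Wt_zero)
  have mechT: "is_mechanism n (\<lambda>_. {0..k}) 0 qt Pt"
    unfolding is_mechanism_def
  proof (intro conjI ballI)
    fix mt i assume i: "i \<in> ?I"
    have "qt i mt \<ge> 0" unfolding qt_def using Wp mechm i by (intro sum_nonneg mult_nonneg_nonneg) auto
    moreover have "qt i mt \<le> (\<Sum>m\<in>?Pr. W mt m * 1)" unfolding qt_def
      using Wp mechm i by (intro sum_mono mult_left_mono) auto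
    ultimately show "0 \<le> qt i mt" "qt i mt \<le> 1" using Wp by auto
  next
    fix mt
    have "(\<Sum>i=1..n. qt i mt) = (\<Sum>m\<in>?Pr. W mt m * (\<Sum>i=1..n. q i m))"
      unfolding qt_def unfolding sum_distrib_left by (rule sum.swap)
    also have "\<dots> \<le> (\<Sum>m\<in>?Pr. W mt m * 1)"
      using Wp mechm by (intro sum_mono mult_left_mono) auto
    finally show "(\<Sum>i=1..n. qt i mt) \<le> 1" using Wp by simp
  next
    fix mt i assume i: "i \<in> ?I"
    have z: "W (mt(i:=0)) m * f m = 0" if "m \<in> ?Pr" "\<And>m. m \<in> ?Pr \<Longrightarrow> f (m(i:=oo)) = 0" for m f
    proof (cases "m i = oo")
      case True
      then have "m(i:=oo) = m" by auto
      then have "f m = 0" using that(2)[OF that(1)] by simp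
      then show ?thesis by simp
    next
      case False
      then show ?thesis using Wz[of i "mt(i:=0)" m] i by simp
    qed
    show "qt i (mt(i := 0)) = 0" unfolding qt_def using z[where f="q i"] mechm i by (intro sum.neutral) auto
    show "Pt i (mt(i := 0)) = 0" unfolding Pt_def using z[where f="P i"] mechm i by (auto simp: d_def intro!: sum.neutral)
  qed (use fin in auto)
  have main: "virtual_revenue n (\<lambda>_. {0..k}) qt Pt (ladder_alpha a) v mt \<ge> min_virtual_revenue n M q P \<alpha> v - real n * \<epsilon>"
    if v01: "0 \<le> v" "v \<le> 1" and mt: "mt \<in> profiles n (\<lambda>_. {0..k})" for v mt
  proof -
    let ?c = "min_virtual_revenue n M q P \<alpha> v"
    let ?U = "utility q P"
    let ?Ut = "utility qt Pt"
    have mtk: "mt i \<le> k" if "i \<in> ?I" for i using mt that unfolding profiles_def by auto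
    have Ut: "?Ut i v jt = (\<Sum>m\<in>?Pr. W jt m * ?U i v m) - d (jt i)" for i jt
      unfolding utility_def qt_def Pt_def
      by (simp add: sum_distrib_left sum_subtractf right_diff_distrib algebra_simps)
    have shift: "(\<Sum>m\<in>?Pr. W (jt(i:=Suc(jt i))) m * ?U i v m) =
        (\<Sum>m\<in>?Pr. W jt m * ?U i v m) + h * (\<Sum>m\<in>?Pr. W jt m * G i v m)" if "i \<in> ?I" for i jt
    proof -
      have "(\<Sum>m\<in>?Pr. W (jt(i:=Suc(jt i))) m * ?U i v m) =
        (\<Sum>m\<in>?Pr. W jt m * (?U i v m + h * (\<Sum>m'\<in>M i. \<alpha> i m' (m i) * (?U i v (m(i:=m')) - ?U i v m))))"
        unfolding W_def by (rule Wt_shift[OF that])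
      also have "\<dots> = (\<Sum>m\<in>?Pr. W jt m * ?U i v m + h * (W jt m * G i v m))"
        by (intro sum.cong refl) (simp add: G_def distrib_left mult.commute mult.left_commute)
      finally show ?thesis by (simp add: sum.distrib sum_distrib_left)
    qed
    have termi: "Pt i mt + (\<Sum>j'\<in>{0..k}. (?Ut i v (mt(i:=j')) - ?Ut i v mt) * ladder_alpha a i j' (mt i))
        \<ge> (\<Sum>m\<in>?Pr. W mt m * (P i m + G i v m)) - \<epsilon>" if i: "i \<in> ?I" for i
    proof -
      have split: "(\<Sum>m\<in>?Pr. W mt m * (P i m + G i v m)) = (\<Sum>m\<in>?Pr. W mt m * P i m) + (\<Sum>m\<in>?Pr. W mt m * G i v m)"
        by (simp add: distrib_left sum.distrib)
      have Pt': "Pt i mt = (\<Sum>m\<in>?Pr. W mt m * P i m) + d (mt i)" by (simp add: Pt_def)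
      show ?thesis
      proof (cases "mt i < k")
        case True
        have ls: "(\<Sum>j'\<in>{0..k}. (?Ut i v (mt(i:=j')) - ?Ut i v mt) * ladder_alpha a i j' (mt i))
           = (?Ut i v (mt(i:=Suc (mt i))) - ?Ut i v mt) * a"
          using ladder_sum[where f="\<lambda>j'. ?Ut i v (mt(i:=j')) - ?Ut i v mt" and k=k and a=a and i=i and j="mt i"] True
          by simp
        have u1: "?Ut i v (mt(i:=Suc (mt i))) = (\<Sum>m\<in>?Pr. W mt m * ?U i v m) + h * (\<Sum>m\<in>?Pr. W mt m * G i v m) - d (Suc (mt i))"
          using Ut[of i "mt(i:=Suc (mt i))"] shift[OF i, of mt] by simp
        have u0: "?Ut i v mt = (\<Sum>m\<in>?Pr. W mt m * ?U i v m) - d (mt i)" by (rule Ut)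
        have "Pt i mt + (\<Sum>j'\<in>{0..k}. (?Ut i v (mt(i:=j')) - ?Ut i v mt) * ladder_alpha a i j' (mt i))
           = (\<Sum>m\<in>?Pr. W mt m * P i m) + (a * h) * (\<Sum>m\<in>?Pr. W mt m * G i v m) + ((1 + a) * d (mt i) - a * d (Suc (mt i)))"
          unfolding ls unfolding u1 u0 Pt' by (simp add: algebra_simps)
        also have "\<dots> \<ge> (\<Sum>m\<in>?Pr. W mt m * (P i m + G i v m)) - \<epsilon>"
          using corr[OF True] ah split by simp
        finally show ?thesis .
      next
        case False
        then have ek: "mt i = k" using mtk[OF i] by simp
        have ls: "(\<Sum>j'\<in>{0..k}. (?Ut i v (mt(i:=j')) - ?Ut i v mt) * ladder_alpha a i j' (mt i)) = 0"
          using ladder_sum[where f="\<lambda>j'. ?Ut i v (mt(i:=j')) - ?Ut i v mt" and k=k and a=a and i=i and j="mt i"] ek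
          by simp
        have dk: "d (mt i) = B" using ek by (simp add: d_def k_def)
        have "(\<Sum>m\<in>?Pr. W mt m * G i v m) \<le> (\<Sum>m\<in>?Pr. W mt m * B)"
          using Wp GB[OF v01 i] by (intro sum_mono mult_left_mono) auto
        also have "\<dots> = B" using Wp by (simp add: sum_distrib_right[symmetric])
        finally show ?thesis using ls Pt' dk split eps by simp
      qed
    qed
    have S1: "virtual_revenue n (\<lambda>_. {0..k}) qt Pt (ladder_alpha a) v mt \<ge>
        (\<Sum>i\<in>?I. (\<Sum>m\<in>?Pr. W mt m * (P i m + G i v m)) - \<epsilon>)"
      unfolding virtual_revenue_def using termi by (intro sum_mono) auto
    have S2: "(\<Sum>i\<in>?I. (\<Sum>m\<in>?Pr. W mt m * (P i m + G i v m)) - \<epsilon>) =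
        (\<Sum>m\<in>?Pr. W mt m * virtual_revenue n M q P \<alpha> v m) - real n * \<epsilon>"
    proof -
      have "(\<Sum>i\<in>?I. \<Sum>m\<in>?Pr. W mt m * (P i m + G i v m)) = (\<Sum>m\<in>?Pr. \<Sum>i\<in>?I. W mt m * (P i m + G i v m))"
        by (rule sum.swap)
      also have "\<dots> = (\<Sum>m\<in>?Pr. W mt m * virtual_revenue n M q P \<alpha> v m)"
        unfolding virtual_revenue_def G_def by (simp add: sum_distrib_left)
      finally show ?thesis by (simp add: sum_subtractf)
    qed
    have S3: "(\<Sum>m\<in>?Pr. W mt m * virtual_revenue n M q P \<alpha> v m) \<ge> (\<Sum>m\<in>?Pr. W mt m * ?c)"
    proof (intro sum_mono mult_left_mono)
      fix m assume m: "m \<in> ?Pr"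
      show "?c \<le> virtual_revenue n M q P \<alpha> v m" unfolding min_virtual_revenue_def
        using finPr m by (intro Min_le) auto
      show "0 \<le> W mt m" using Wp m by auto
    qed
    have S4: "(\<Sum>m\<in>?Pr. W mt m * ?c) = ?c"
      using Wp by (simp add: sum_distrib_right[symmetric])
    show ?thesis using S1 S2 S3 S4 by linarith
  qed
  show ?thesis
    apply (rule exI[of _ a], rule exI[of _ k], rule exI[of _ qt], rule exI[of _ Pt])
    using apos' mechT main by (auto simp: k_def)
qed



lemma comp_inv_upd:
  assumes "\<sigma> permutes S"
  shows "(m(i:=x)) \<circ> inv \<sigma> = (m \<circ> inv \<sigma>)(\<sigma> i := x)"
  using assms by (auto simp: fun_eq_iff permutes_inv_eq)

lemma comp_inv_at:
  assumes "\<sigma> permutes S"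
  shows "(m \<circ> inv \<sigma>) (\<sigma> i) = m i"
  using assms by (simp add: permutes_inverses)

lemma profiles_comp_inv:
  assumes "\<sigma> permutes {1..n}" "m \<in> profiles n (\<lambda>_. A)"
  shows "m \<circ> inv \<sigma> \<in> profiles n (\<lambda>_. A)"
proof -
  have pi: "inv \<sigma> permutes {1..n}" using assms(1) by (rule permutes_inv)
  have mA: "\<forall>x\<in>{1..n}. m x \<in> A" and mE: "m \<in> extensional {1..n}"
    using assms(2) unfolding profiles_def PiE_iff by auto
  have 1: "\<forall>x\<in>{1..n}. (m \<circ> inv \<sigma>) x \<in> A"
  proof
    fix x assume "x \<in> {1..n}"
    then have "inv \<sigma> x \<in> {1..n}" using permutes_in_image[OF pi] by simp
    then show "(m \<circ> inv \<sigma>) x \<in> A" using mA by simp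
  qed
  have 2: "m \<circ> inv \<sigma> \<in> extensional {1..n}"
    unfolding extensional_def
  proof (intro CollectI allI impI)
    fix x assume x: "x \<notin> {1..n}"
    then have "inv \<sigma> x = x" using permutes_not_in[OF pi] by simp
    then show "(m \<circ> inv \<sigma>) x = undefined" using extensional_arb[OF mE x] by simp
  qed
  show ?thesis unfolding profiles_def PiE_iff using 1 2 by blast
qed

lemma util_sym:
  "utility (symmetrize n q) (symmetrize n P) i v x =
     (\<Sum>\<sigma>\<in>{\<sigma>. \<sigma> permutes {1..n}}. utility q P (\<sigma> i) v (x \<circ> inv \<sigma>)) / fact n"
  unfolding utility_def symmetrize_def
  by (simp add: sum_subtractf sum_distrib_left diff_divide_distrib)

lemma aux_div: "(\<Sum>j\<in>A. (s j / F - t / F) * b j) = (\<Sum>j\<in>A. (s j - t) * b j) / (F::real)"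
  by (cases "F=0") (simp_all add: sum_divide_distrib field_simps)

lemma vr_sym:
  assumes "\<And>i. \<alpha> i = \<beta>"
  shows "virtual_revenue n (\<lambda>_. A) (symmetrize n q) (symmetrize n P) \<alpha> v m =
    (\<Sum>\<sigma>\<in>{\<sigma>. \<sigma> permutes {1..n}}. virtual_revenue n (\<lambda>_. A) q P \<alpha> v (m \<circ> inv \<sigma>)) / fact n"
proof -
  let ?Pm = "{\<sigma>. \<sigma> permutes {1..n}}"
  define T where "T l y = P l y + (\<Sum>j'\<in>A. (utility q P l v (y(l:=j')) - utility q P l v y) * \<beta> j' (y l))" for l y
  have VR: "virtual_revenue n (\<lambda>_. A) q P \<alpha> v y = (\<Sum>l=1..n. T l y)" for y
    unfolding virtual_revenue_def T_def assms ..
  have step: "symmetrize n P i m + (\<Sum>j'\<in>A. (utility (symmetrize n q) (symmetrize n P) i v (m(i:=j'))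
        - utility (symmetrize n q) (symmetrize n P) i v m) * \<beta> j' (m i))
      = (\<Sum>\<sigma>\<in>?Pm. T (\<sigma> i) (m \<circ> inv \<sigma>)) / fact n" for i
  proof -
    have "(\<Sum>\<sigma>\<in>?Pm. T (\<sigma> i) (m \<circ> inv \<sigma>)) = (\<Sum>\<sigma>\<in>?Pm. P (\<sigma> i) (m \<circ> inv \<sigma>) +
       (\<Sum>j'\<in>A. (utility q P (\<sigma> i) v (m(i:=j') \<circ> inv \<sigma>) - utility q P (\<sigma> i) v (m \<circ> inv \<sigma>)) * \<beta> j' (m i)))"
      by (rule sum.cong) (auto simp: T_def comp_inv_upd comp_inv_at permutes_inverses)
    also have "\<dots> = (\<Sum>\<sigma>\<in>?Pm. P (\<sigma> i) (m \<circ> inv \<sigma>)) +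
       (\<Sum>j'\<in>A. ((\<Sum>\<sigma>\<in>?Pm. utility q P (\<sigma> i) v (m(i:=j') \<circ> inv \<sigma>)) - (\<Sum>\<sigma>\<in>?Pm. utility q P (\<sigma> i) v (m \<circ> inv \<sigma>))) * \<beta> j' (m i))"
      using sum.swap[of "\<lambda>\<sigma> j'. (utility q P (\<sigma> i) v (m(i:=j') \<circ> inv \<sigma>) - utility q P (\<sigma> i) v (m \<circ> inv \<sigma>)) * \<beta> j' (m i)" A ?Pm]
      by (simp add: sum.distrib sum_subtractf sum_distrib_right left_diff_distrib)
    finally show ?thesis
      by (simp add: util_sym symmetrize_def add_divide_distrib aux_div)
  qed
  have "virtual_revenue n (\<lambda>_. A) (symmetrize n q) (symmetrize n P) \<alpha> v m =
      (\<Sum>i=1..n. (\<Sum>\<sigma>\<in>?Pm. T (\<sigma> i) (m \<circ> inv \<sigma>)) / fact n)"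
    unfolding virtual_revenue_def assms using step by simp
  also have "\<dots> = (\<Sum>\<sigma>\<in>?Pm. \<Sum>i=1..n. T (\<sigma> i) (m \<circ> inv \<sigma>)) / fact n"
    unfolding sum_divide_distrib by (rule sum.swap)
  also have "\<dots> = (\<Sum>\<sigma>\<in>?Pm. virtual_revenue n (\<lambda>_. A) q P \<alpha> v (m \<circ> inv \<sigma>)) / fact n"
  proof -
    have "(\<Sum>i=1..n. T (\<sigma> i) y) = (\<Sum>l=1..n. T l y)" if "\<sigma> permutes {1..n}" for \<sigma> y
      using sum.reindex[of \<sigma> "{1..n}" "\<lambda>l. T l y"] permutes_inj_on[OF that] permutes_image[OF that]
      by simp
    then show ?thesis by (simp add: VR)
  qed
  finally show ?thesis .
qed


lemma part2:
  assumes m: "m \<in> profiles n (\<lambda>_. {0..k::nat})"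
  shows "virtual_revenue n (\<lambda>_. {0..k}) (symmetrize n q2) (symmetrize n P2) (ladder_alpha a) v m
           \<ge> min_virtual_revenue n (\<lambda>_. {0..k}) q2 P2 (ladder_alpha a) v"
proof -
  let ?Pm = "{\<sigma>. \<sigma> permutes {1..n}}"
  let ?c = "min_virtual_revenue n (\<lambda>_. {0..k}) q2 P2 (ladder_alpha a) v"
  have la: "\<And>i. ladder_alpha a i = ladder_alpha a 0" by (simp add: ladder_alpha_def fun_eq_iff)
  have finPr: "finite (profiles n (\<lambda>_. {0..k}))" unfolding profiles_def by (intro finite_PiE) auto
  have ge: "?c \<le> virtual_revenue n (\<lambda>_. {0..k}) q2 P2 (ladder_alpha a) v (m \<circ> inv \<sigma>)" if "\<sigma> \<in> ?Pm" for \<sigma>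
    unfolding min_virtual_revenue_def using finPr profiles_comp_inv[of \<sigma> n m] that m
    by (intro Min_le) auto
  have "(\<Sum>\<sigma>\<in>?Pm. ?c) \<le> (\<Sum>\<sigma>\<in>?Pm. virtual_revenue n (\<lambda>_. {0..k}) q2 P2 (ladder_alpha a) v (m \<circ> inv \<sigma>))"
    using ge by (rule sum_mono)
  then have A: "real (card ?Pm) * ?c \<le> (\<Sum>\<sigma>\<in>?Pm. virtual_revenue n (\<lambda>_. {0..k}) q2 P2 (ladder_alpha a) v (m \<circ> inv \<sigma>))"
    by simp
  have "card ?Pm = fact n" using card_permutations[of "{1..n}" n] by simp
  then have cardR: "real (card ?Pm) = fact n" by (metis of_nat_fact)
  have B: "fact n * ?c \<le> (\<Sum>\<sigma>\<in>?Pm. virtual_revenue n (\<lambda>_. {0..k}) q2 P2 (ladder_alpha a) v (m \<circ> inv \<sigma>))"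
    using A unfolding cardR .
  have "fact n > (0::real)" by simp
  then have "?c \<le> (\<Sum>\<sigma>\<in>?Pm. virtual_revenue n (\<lambda>_. {0..k}) q2 P2 (ladder_alpha a) v (m \<circ> inv \<sigma>)) / fact n"
    using B by (simp add: pos_le_divide_eq mult.commute)
  then show ?thesis using vr_sym[of "ladder_alpha a" "ladder_alpha a 0", OF la] by simp
qed

theorem mainTheorem6:
  fixes n N :: nat and M :: "nat \<Rightarrow> 'm set" and oo :: 'm
    and q P :: "nat \<Rightarrow> (nat \<Rightarrow> 'm) \<Rightarrow> real"
    and \<alpha> :: "nat \<Rightarrow> 'm \<Rightarrow> 'm \<Rightarrow> real" and \<epsilon> :: real
  assumes "N \<ge> 1"
    and "is_mechanism n M oo q P"
    and "\<forall>i\<in>{1..n}. \<forall>m'\<in>M i. \<forall>mi\<in>M i. \<alpha> i m' mi \<ge> 0"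
    and "\<epsilon> > 0"
  shows "(\<exists>(a::real) (k::nat) (qt::nat \<Rightarrow> (nat \<Rightarrow> nat) \<Rightarrow> real) (Pt::nat \<Rightarrow> (nat \<Rightarrow> nat) \<Rightarrow> real).
            a > 0 \<and> k \<ge> 1 \<and> is_mechanism n (\<lambda>_. {0..k}) 0 qt Pt \<and>
            (\<forall>v\<in>value_grid N. \<forall>mt\<in>profiles n (\<lambda>_. {0..k}).
               virtual_revenue n (\<lambda>_. {0..k}) qt Pt (ladder_alpha a) v mt
                 \<ge> min_virtual_revenue n M q P \<alpha> v - real n * \<epsilon>))
       \<and> (\<forall>(k::nat) (a::real) (q2::nat \<Rightarrow> (nat \<Rightarrow> nat) \<Rightarrow> real) (P2::nat \<Rightarrow> (nat \<Rightarrow> nat) \<Rightarrow> real).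
            a > 0 \<longrightarrow> is_mechanism n (\<lambda>_. {0..k}) 0 q2 P2 \<longrightarrow>
            (\<forall>v\<in>value_grid N. \<forall>m\<in>profiles n (\<lambda>_. {0..k}).
               virtual_revenue n (\<lambda>_. {0..k}) (symmetrize n q2) (symmetrize n P2) (ladder_alpha a) v m
                 \<ge> min_virtual_revenue n (\<lambda>_. {0..k}) q2 P2 (ladder_alpha a) v))"
  proof (rule conjI)
  have vg: "0 \<le> v \<and> v \<le> 1" if "v \<in> value_grid N" for v
    using that assms(1) unfolding value_grid_def by auto
  obtain a k qt Pt where H: "a > 0 \<and> k \<ge> 1 \<and> is_mechanism n (\<lambda>_. {0..k}) 0 qt Pt \<and>
            (\<forall>v. 0 \<le> v \<and> v \<le> 1 \<longrightarrow> (\<forall>mt\<in>profiles n (\<lambda>_. {0..k}).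
               virtual_revenue n (\<lambda>_. {0..k}) qt Pt (ladder_alpha a) v mt
                 \<ge> min_virtual_revenue n M q P \<alpha> v - real n * \<epsilon>))"
    using part1[OF assms(2,3,4)] by blast
  show "\<exists>(a::real) (k::nat) (qt::nat \<Rightarrow> (nat \<Rightarrow> nat) \<Rightarrow> real) (Pt::nat \<Rightarrow> (nat \<Rightarrow> nat) \<Rightarrow> real).
            a > 0 \<and> k \<ge> 1 \<and> is_mechanism n (\<lambda>_. {0..k}) 0 qt Pt \<and>
            (\<forall>v\<in>value_grid N. \<forall>mt\<in>profiles n (\<lambda>_. {0..k}).
               virtual_revenue n (\<lambda>_. {0..k}) qt Pt (ladder_alpha a) v mt
                 \<ge> min_virtual_revenue n M q P \<alpha> v - real n * \<epsilon>)"
    using H vg by blast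
next
  show "\<forall>(k::nat) (a::real) (q2::nat \<Rightarrow> (nat \<Rightarrow> nat) \<Rightarrow> real) (P2::nat \<Rightarrow> (nat \<Rightarrow> nat) \<Rightarrow> real).
            a > 0 \<longrightarrow> is_mechanism n (\<lambda>_. {0..k}) 0 q2 P2 \<longrightarrow>
            (\<forall>v\<in>value_grid N. \<forall>m\<in>profiles n (\<lambda>_. {0..k}).
               virtual_revenue n (\<lambda>_. {0..k}) (symmetrize n q2) (symmetrize n P2) (ladder_alpha a) v m
                 \<ge> min_virtual_revenue n (\<lambda>_. {0..k}) q2 P2 (ladder_alpha a) v)"
    using part2 by blast
qed

end
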